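(* Let $n\ge2$ and $1\le w_n\le n-1$. For every $\delta>0$ there exist independent, non-identically distributed nonnegative rewards $X_1,\dots,X_n$ such that every algorithm in the window-access model with window size $w_n$, even one that observes the rewards exactly and knows their distributions, satisfies $$\frac{\mathbb{E}[X_\tau]}{\mathbb{E}[\max_{i\in[n]}X_i]}\le\frac12+\delta.$$
   Context: Window-access model with window size $w_n$: the rewards are revealed one at a time. At time $i$, the decision maker may stop and select any index in $\{\max(1,i-w_n+1),\dots,i\}$, receiving that index's reward $X_\tau$. Otherwise it proceeds to time $i+1$. If it never stops, the payoff is $0$. Decisions may depend only on the information revealed so far. *)

theory Defs
  imports "HOL-Probability.Probability"
begin

text \<open>Rewards are indexed by 1..n; a reward vector is a function
  x :: nat => real (only x 1, ..., x n matter). An algorithm is a (deterministic) decision rule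
  A i x :: nat option used at time i: None = continue, Some j = stop now and select index j.\<close>

definition window_alg :: "nat \<Rightarrow> nat \<Rightarrow> (nat \<Rightarrow> (nat \<Rightarrow> real) \<Rightarrow> nat option) \<Rightarrow> bool" where
  "window_alg n w A \<longleftrightarrow>
     (\<forall>i\<in>{1..n}. \<forall>x y. (\<forall>j\<in>{1..i}. x j = y j) \<longrightarrow> A i x = A i y) \<and>
     (\<forall>i\<in>{1..n}. \<forall>x j. A i x = Some j \<longrightarrow> j \<in> {max 1 (i + 1 - w)..i})"

definition stop_time :: "nat \<Rightarrow> (nat \<Rightarrow> (nat \<Rightarrow> real) \<Rightarrow> nat option) \<Rightarrow> (nat \<Rightarrow> real) \<Rightarrow> nat option" where
  "stop_time n A x =
     (if \<exists>i\<in>{1..n}. A i x \<noteq> None then Some (LEAST i. i \<in> {1..n} \<and> A i x \<noteq> None) else None)"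

definition payoff :: "nat \<Rightarrow> (nat \<Rightarrow> (nat \<Rightarrow> real) \<Rightarrow> nat option) \<Rightarrow> (nat \<Rightarrow> real) \<Rightarrow> real" where
  "payoff n A x = (case stop_time n A x of None \<Rightarrow> 0 | Some i \<Rightarrow> x (the (A i x)))"

end

theory Submission
  imports Defs
begin

lemma comp_integral:
  assumes "\<And>i. prob_space (D i)" "k \<in> I" "g \<in> borel_measurable (D k)"
  shows "(\<integral>\<^sup>+ x. g (x k) \<partial>(PiM I D)) = (\<integral>\<^sup>+ y. g y \<partial>(D k))"
proof -
  have "(\<integral>\<^sup>+ y. g y \<partial>(D k)) = (\<integral>\<^sup>+ y. g y \<partial>(distr (PiM I D) (D k) (\<lambda>\<omega>. \<omega> k)))"
    using distr_PiM_component[of I D k] assms by simp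
  also have "\<dots> = (\<integral>\<^sup>+ x. g (x k) \<partial>(PiM I D))"
    using assms by (intro nn_integral_distr) (auto)
  finally show ?thesis by simp
qed

lemma max_lemma:
  fixes x :: "nat \<Rightarrow> real"
  assumes "2 \<le> k" "k \<le> n" "\<And>j. j \<in> {1..n} \<Longrightarrow> j \<noteq> k \<Longrightarrow> x j = (if j = 1 then 1 else 0)"
    "0 \<le> x k"
  shows "Max ((\<lambda>i. x i) ` {1..n}) = max 1 (x k)"
proof (rule Max_eqI)
  show "finite ((\<lambda>i. x i) ` {1..n})" by simp
  show "y \<le> max 1 (x k)" if y: "y \<in> (\<lambda>i. x i) ` {1..n}" for y
  proof -
    obtain i where i: "i \<in> {1..n}" "y = x i" using y by auto
    show ?thesis using assms(3)[OF i(1)] i by (cases "i = k") auto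
  qed
  show "max 1 (x k) \<in> (\<lambda>i. x i) ` {1..n}"
  proof (cases "1 \<le> x k")
    case True then show ?thesis using assms by auto
  next
    case False
    have "x 1 = 1" using assms by auto
    then show ?thesis using assms False by (auto intro!: image_eqI[of _ _ 1])
  qed
qed

lemma stop_Some:
  assumes "stop_time n A x = Some s"
  shows "s \<in> {1..n} \<and> A s x \<noteq> None \<and> (\<forall>i. 1 \<le> i \<and> i < s \<longrightarrow> A i x = None)"
proof -
  have ex: "\<exists>i\<in>{1..n}. A i x \<noteq> None" and sdef: "s = (LEAST i. i \<in> {1..n} \<and> A i x \<noteq> None)"
    using assms by (auto simp: stop_time_def split: if_splits)
  then obtain i0 where "i0 \<in> {1..n} \<and> A i0 x \<noteq> None" by blast
  then have P: "s \<in> {1..n} \<and> A s x \<noteq> None" unfolding sdef by (rule LeastI)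
  have "A i x = None" if "1 \<le> i" "i < s" for i
  proof (rule ccontr)
    assume "A i x \<noteq> None"
    then have "s \<le> i" using that P unfolding sdef by (intro Least_le) auto
    then show False using that by simp
  qed
  then show ?thesis using P by blast
qed

lemma stop_exists:
  assumes "i \<in> {1..n}" "A i x \<noteq> None"
  shows "\<exists>s. stop_time n A x = Some s \<and> s \<le> i"
proof -
  have "(LEAST i. i \<in> {1..n} \<and> A i x \<noteq> None) \<le> i" using assms by (intro Least_le) auto
  then show ?thesis using assms by (auto simp: stop_time_def)
qed

lemma payoff_Some: "stop_time n A x = Some s \<Longrightarrow> A s x = Some j \<Longrightarrow> payoff n A x = x j"
  by (simp add: payoff_def)

lemma payoff_None: "stop_time n A x = None \<Longrightarrow> payoff n A x = 0"
  by (simp add: payoff_def)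

theorem proposition3:
  fixes n w :: nat and \<delta> :: real
  assumes "n \<ge> 2" and "1 \<le> w" and "w \<le> n - 1" and "\<delta> > 0"
  shows "\<exists>D :: nat \<Rightarrow> real measure.
     (\<forall>i\<in>{1..n}. prob_space (D i) \<and> sets (D i) = sets borel \<and> (AE x in D i. 0 \<le> x)) \<and>
     (\<exists>i\<in>{1..n}. \<exists>j\<in>{1..n}. D i \<noteq> D j) \<and>
     0 < (\<integral>\<^sup>+ x. ennreal (Max ((\<lambda>i. x i) ` {1..n})) \<partial>(PiM {1..n} D)) \<and>
     (\<integral>\<^sup>+ x. ennreal (Max ((\<lambda>i. x i) ` {1..n})) \<partial>(PiM {1..n} D)) < \<infinity> \<and>
     (\<forall>A. window_alg n w A \<and>
          (\<forall>i\<in>{1..n}. A i \<in> measurable (PiM {1..n} D) (count_space UNIV)) \<longrightarrow>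
          (\<integral>\<^sup>+ x. ennreal (payoff n A x) \<partial>(PiM {1..n} D))
            \<le> ennreal (1/2 + \<delta>) * (\<integral>\<^sup>+ x. ennreal (Max ((\<lambda>i. x i) ` {1..n})) \<partial>(PiM {1..n} D)))"
proof -
  define p where "p = min (1/2) \<delta>"
  define M where "M = 1 / p"
  define k where "k = w + 1"
  define c :: "nat \<Rightarrow> real" where "c = (\<lambda>j. if j = 1 then 1 else 0)"
  define B where "B = distr (measure_pmf (bernoulli_pmf p)) borel (\<lambda>b. if b then M else 0)"
  define D where "D = (\<lambda>j. if j = k then B else return borel (c j))"
  have p0: "0 < p" and p1: "p \<le> 1/2" using assms by (auto simp: p_def)
  have M1: "1 \<le> M" using p0 p1 by (simp add: M_def field_simps)
  have Mp: "M * p = 1" using p0 by (simp add: M_def)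
  have k2: "2 \<le> k" "k \<le> n" using assms by (auto simp: k_def)
  have probB: "prob_space B" unfolding B_def
    by (intro prob_space.prob_space_distr) (auto simp: prob_space_measure_pmf)
  have probD: "prob_space (D i)" for i
    using probB by (auto simp: D_def prob_space_return)
  have setsD: "sets (D i) = sets borel" for i
    by (auto simp: D_def B_def)
  have AEB: "AE y in B. y = 0 \<or> y = M" unfolding B_def
    by (subst AE_distr_iff) (auto simp: AE_measure_pmf_iff)
  have AEc: "AE y in D j. y = c j" if "j \<noteq> k" for j
  proof -
    have "D j = return borel (c j)" using that by (simp add: D_def)
    moreover have "AE y in return borel (c j). y = c j"
      by (rule AE_return[THEN iffD2]) auto
    ultimately show ?thesis by (simp only:)
  qed
  have AEpos: "AE y in D j. 0 \<le> y" for j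
  proof (cases "j = k")
    case True
    have "D j = B" using True by (simp add: D_def)
    then show ?thesis using AEB M1 by (simp only:) (auto elim!: eventually_mono)
  next
    case False then show ?thesis using AEc[OF False] by (auto simp: c_def elim!: eventually_mono)
  qed
  let ?P = "PiM {1..n} D"
  have AEall: "AE x in ?P. (\<forall>j\<in>{1..n}. j \<noteq> k \<longrightarrow> x j = c j) \<and> (x k = 0 \<or> x k = M)"
  proof -
    have "AE x in ?P. \<forall>j\<in>{1..n}. j \<noteq> k \<longrightarrow> x j = c j"
      by (intro eventually_ball_finite ballI) (auto intro!: AE_PiM_component probD AEc)
    moreover have "AE x in ?P. x k = 0 \<or> x k = M"
    proof -
      have DK: "D k = B" by (simp add: D_def)
      have "AE y in D k. y = 0 \<or> y = M" using AEB DK by (simp only:)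
      then show ?thesis using AE_PiM_component[of "{1..n}" D k "\<lambda>y. y = 0 \<or> y = M"] probD k2 by simp
    qed
    ultimately show ?thesis by eventually_elim auto
  qed
  have intB: "(\<integral>\<^sup>+ y. g y \<partial>B) = g M * p + g 0 * (1 - p)" if "g \<in> borel_measurable borel" for g
  proof -
    have "(\<integral>\<^sup>+ y. g y \<partial>B) = (\<integral>\<^sup>+ b. g (if b then M else 0) \<partial>measure_pmf (bernoulli_pmf p))"
      unfolding B_def using that by (subst nn_integral_distr) auto
    also have "\<dots> = g M * p + g 0 * (1 - p)"
      using p0 p1 by (subst nn_integral_bernoulli_pmf) auto
    finally show ?thesis .
  qed
  have IBmax: "(\<integral>\<^sup>+ y. ennreal (max 1 y) \<partial>D k) = ennreal (2 - p)"
  proof -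
    have "(\<integral>\<^sup>+ y. ennreal (max 1 y) \<partial>D k) = ennreal (max 1 M) * p + ennreal (max 1 0) * (1 - p)"
      by (simp add: D_def intB)
    also have "\<dots> = 1 + ennreal (1 - p)"
      using M1 p0 p1 Mp by (simp add: ennreal_mult[symmetric])
    also have "\<dots> = ennreal (1 + (1 - p))"
      using p1 by (subst ennreal_plus) auto
    also have "\<dots> = ennreal (2 - p)" by simp
    finally show ?thesis .
  qed
  have Imax: "(\<integral>\<^sup>+ x. ennreal (Max ((\<lambda>i. x i) ` {1..n})) \<partial>?P) = ennreal (2 - p)"
  proof -
    have "(\<integral>\<^sup>+ x. ennreal (Max ((\<lambda>i. x i) ` {1..n})) \<partial>?P) = (\<integral>\<^sup>+ x. ennreal (max 1 (x k)) \<partial>?P)"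
    proof (intro nn_integral_cong_AE, use AEall in eventually_elim)
      case (elim x)
      then show ?case using max_lemma[of k n x] k2 M1 by (auto simp: c_def)
    qed
    also have "\<dots> = (\<integral>\<^sup>+ y. ennreal (max 1 y) \<partial>D k)"
      using k2 probD by (intro comp_integral) (auto simp: setsD cong: measurable_cong_sets)
    finally show ?thesis using IBmax by simp
  qed
  have Ik: "(\<integral>\<^sup>+ x. ennreal (x k) \<partial>?P) = 1"
  proof -
    have "(\<integral>\<^sup>+ x. ennreal (x k) \<partial>?P) = (\<integral>\<^sup>+ y. ennreal y \<partial>D k)"
      using k2 probD by (intro comp_integral) (auto simp: setsD cong: measurable_cong_sets)
    also have "\<dots> = ennreal M * p"
      by (simp add: D_def intB)
    also have "\<dots> = 1" using Mp M1 p0 by (simp add: ennreal_mult[symmetric])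
    finally show ?thesis .
  qed
  have final: "1 \<le> ennreal (1/2 + \<delta>) * ennreal (2 - p)"
  proof -
    have "1 \<le> (1/2 + \<delta>) * (2 - p)"
    proof -
      have a: "p * \<delta> \<le> 1/2 * \<delta>" using p1 assms(4) by (intro mult_right_mono) auto
      have b: "p \<le> \<delta>" by (simp add: p_def)
      have "(1/2 + \<delta>) * (2 - p) = 1 + 2 * \<delta> - p / 2 - p * \<delta>" by (simp add: field_simps)
      then show ?thesis using a b assms(4) by linarith
    qed
    then have "ennreal 1 \<le> ennreal ((1/2 + \<delta>) * (2 - p))" by (rule ennreal_leI)
    also have "\<dots> = ennreal (1/2 + \<delta>) * ennreal (2 - p)"
      using p1 assms(4) by (intro ennreal_mult) auto
    finally show ?thesis by simp
  qed
  show ?thesis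
  proof (intro exI[of _ D] conjI ballI allI impI)
    fix i show "prob_space (D i)" by (rule probD)
  next
    fix i show "sets (D i) = sets borel" by (rule setsD)
  next
    fix i show "AE x in D i. 0 \<le> x" by (rule AEpos)
  next
    have "D 1 \<noteq> D k"
    proof
      assume eq: "D 1 = D k"
      have R: "D 1 = return borel 1" using k2 by (simp add: D_def c_def)
      have "(\<integral>\<^sup>+ y. ennreal (max 1 y) \<partial>return borel 1) = ennreal (max 1 1)"
        by (rule nn_integral_return) auto
      then have "(\<integral>\<^sup>+ y. ennreal (max 1 y) \<partial>D 1) = ennreal (max 1 1)"
        using R by (simp only:)
      then have "ennreal 1 = ennreal (2 - p)" using eq IBmax by simp
      then show False using p1 by simp
    qed
    then show "\<exists>i\<in>{1..n}. \<exists>j\<in>{1..n}. D i \<noteq> D j" using k2 by force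
  next
    show "0 < (\<integral>\<^sup>+ x. ennreal (Max ((\<lambda>i. x i) ` {1..n})) \<partial>?P)"
      using Imax p1 by simp
  next
    show "(\<integral>\<^sup>+ x. ennreal (Max ((\<lambda>i. x i) ` {1..n})) \<partial>?P) < \<infinity>"
      using Imax by simp
  next
    fix A assume "window_alg n w A \<and> (\<forall>i\<in>{1..n}. A i \<in> measurable ?P (count_space UNIV))"
    then have WA: "window_alg n w A" by simp
    have PAY: "(\<integral>\<^sup>+ x. ennreal (payoff n A x) \<partial>?P) \<le> 1"
    proof -
    have dep: "A i x = A i c" if "i \<in> {1..w}" "\<forall>j\<in>{1..n}. j \<noteq> k \<longrightarrow> x j = c j" for i x
    proof -
      have "\<forall>j\<in>{1..i}. x j = c j" using that k2 by (auto simp: k_def)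
      moreover have "i \<in> {1..n}" using that k2 by (auto simp: k_def)
      ultimately show ?thesis using WA unfolding window_alg_def by blast
    qed
    have win: "j \<in> {max 1 (s + 1 - w)..s}" if "s \<in> {1..n}" "A s x = Some j" for s x j
      using WA that unfolding window_alg_def by blast
    have probP: "prob_space ?P" by (rule prob_space_PiM) (rule probD)
    show "(\<integral>\<^sup>+ x. ennreal (payoff n A x) \<partial>?P) \<le> 1"
    proof (cases "\<exists>i\<in>{1..w}. A i c \<noteq> None")
      case True
      then obtain i0 where i0: "i0 \<in> {1..w}" "A i0 c \<noteq> None" by blast
      have "AE x in ?P. ennreal (payoff n A x) \<le> ennreal 1"
        using AEall
      proof eventually_elim
        case (elim x)
        then have E: "\<forall>j\<in>{1..n}. j \<noteq> k \<longrightarrow> x j = c j" by blast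
        have "A i0 x \<noteq> None" using dep[OF i0(1) E] i0 by simp
        moreover have "i0 \<in> {1..n}" using i0 k2 by (auto simp: k_def)
        ultimately obtain s where s: "stop_time n A x = Some s" "s \<le> i0"
          using stop_exists by blast
        from stop_Some[OF s(1)] obtain j where sj: "s \<in> {1..n}" "A s x = Some j" by auto
        have "j \<in> {max 1 (s + 1 - w)..s}" by (rule win[OF sj])
        then have j: "1 \<le> j" "j \<le> w" using s i0 by auto
        have "payoff n A x = x j" by (rule payoff_Some[OF s(1) sj(2)])
        also have "\<dots> = c j" using E j k2 by (auto simp: k_def)
        also have "\<dots> \<le> 1" by (simp add: c_def)
        finally show ?case by (intro ennreal_leI)
      qed
      then have "(\<integral>\<^sup>+ x. ennreal (payoff n A x) \<partial>?P) \<le> (\<integral>\<^sup>+ x. ennreal 1 \<partial>?P)"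
        by (rule nn_integral_mono_AE)
      also have "\<dots> = 1" using probP by (simp add: prob_space.emeasure_space_1)
      finally show ?thesis .
    next
      case False
      have "AE x in ?P. ennreal (payoff n A x) \<le> ennreal (x k)"
        using AEall
      proof eventually_elim
        case (elim x)
        then have E: "\<forall>j\<in>{1..n}. j \<noteq> k \<longrightarrow> x j = c j" and xk: "0 \<le> x k"
          using M1 by auto
        show ?case
        proof (cases "stop_time n A x")
          case None
          then show ?thesis using xk by (simp add: payoff_None)
        next
          case (Some s)
          from stop_Some[OF Some] obtain j where sj: "s \<in> {1..n}" "A s x = Some j" by auto
          have "s > w"
          proof (rule ccontr)
            assume "\<not> w < s"
            then have "s \<in> {1..w}" using sj by auto
            then have "A s x = None" using dep[OF _ E] False by auto
            then show False using sj by simp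
          qed
          have "j \<in> {max 1 (s + 1 - w)..s}" by (rule win[OF sj])
          then have j: "2 \<le> j" "j \<le> n" using \<open>s > w\<close> sj by auto
          have "payoff n A x = x j" by (rule payoff_Some[OF Some sj(2)])
          also have "\<dots> \<le> x k" using E j xk by (cases "j = k") (auto simp: c_def)
          finally show ?thesis by (intro ennreal_leI)
        qed
      qed
      then have "(\<integral>\<^sup>+ x. ennreal (payoff n A x) \<partial>?P) \<le> (\<integral>\<^sup>+ x. ennreal (x k) \<partial>?P)"
        by (rule nn_integral_mono_AE)
      also have "\<dots> = 1" by (rule Ik)
      finally show ?thesis .
    qed
    qed
    then show "(\<integral>\<^sup>+ x. ennreal (payoff n A x) \<partial>?P) \<le> ennreal (1/2 + \<delta>) * (\<integral>\<^sup>+ x. ennreal (Max ((\<lambda>i. x i) ` {1..n})) \<partial>?P)"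
      using final Imax by (metis order_trans)
  qed
qed

end
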